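(* For the unstructured search problem with marked set $M$, $1\le |M|<2^n$, $$\dim(\mathfrak g_{\mathrm{QWOA,Search}})=\begin{cases}4,& |M|=1,\\ 5,&\text{otherwise.}\end{cases}$$
   Context: Unstructured search: solution space $\mathcal S=\{0,1\}^n$, cost $C:\mathcal S\to\{0,1\}$, marked set $M=\{z:C(z)=1\}$. $H_C$ is the diagonal matrix with $H_C|z\rangle=C(z)|z\rangle$ (projector onto marked basis states); $H_M$ is the $2^n\times 2^n$ all-ones matrix. $\mathfrak g_{\mathrm{QWOA,Search}}$ is the real Lie algebra generated by $iH_C$ and $iH_M$, i.e. the smallest real linear subspace of $2^n\times 2^n$ complex matrices containing them and closed under the commutator $[A,B]=AB-BA$; its dimension is its real dimension. *)

theory Defs
  imports "HOL-Analysis.Analysis"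
begin

text \<open>Basis states z \<in> {0,1}^n are modelled as bool^'n (n = CARD('n)).
 Operators on the 2^n-dimensional space are complex matrices indexed by basis states.\<close>

type_synonym 'n op = "complex ^ (bool ^ 'n) ^ (bool ^ 'n)"

definition H_C :: "(bool ^ 'n) set \<Rightarrow> 'n::finite op" where
  "H_C M = (\<chi> z w. if z = w \<and> z \<in> M then 1 else 0)"

definition H_M :: "'n::finite op" where
  "H_M = (\<chi> z w. 1)"

definition iop :: "'n::finite op \<Rightarrow> 'n op" where
  "iop A = (\<chi> z w. \<i> * A $ z $ w)"

definition commutator :: "'n::finite op \<Rightarrow> 'n op \<Rightarrow> 'n op" where
  "commutator A B = A ** B - B ** A"

definition lie_generated :: "'n::finite op set \<Rightarrow> 'n op set" where
  "lie_generated G = \<Inter>{L. subspace L \<and> G \<subseteq> L \<and> (\<forall>A\<in>L. \<forall>B\<in>L. commutator A B \<in> L)}"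

definition g_QWOA_Search :: "(bool ^ 'n) set \<Rightarrow> 'n::finite op set" where
  "g_QWOA_Search M = lie_generated {iop (H_C M), iop H_M}"

end

theory Submission
  imports Defs
begin

definition Fm :: "(bool^'n::finite) set \<Rightarrow> complex \<Rightarrow> complex \<Rightarrow> complex \<Rightarrow> complex \<Rightarrow> complex \<Rightarrow> 'n op" where
"Fm M al be ga de ep = (\<chi> z w. (if z \<in> M then (if w \<in> M then al else ga) else (if w \<in> M then de else be))
   + (if z = w \<and> z \<in> M then ep else 0))"

lemma sum_split_M: "sum f (UNIV :: 'a::finite set) = sum f M + sum f (- M)"
  using sum.union_disjoint[of M "-M" f] by (simp add: Compl_partition)

lemma Fm_mult:
  fixes M :: "(bool^'n::finite) set"
  shows "Fm M al be ga de ep ** Fm M al' be' ga' de' ep' =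
   Fm M (of_nat (card M) * al * al' + of_nat (card (-M)) * ga * de' + al * ep' + ep * al')
        (of_nat (card M) * de * ga' + of_nat (card (-M)) * be * be')
        (of_nat (card M) * al * ga' + of_nat (card (-M)) * ga * be' + ep * ga')
        (of_nat (card M) * de * al' + of_nat (card (-M)) * be * de' + de * ep')
        (ep * ep')"
proof -
  have A: "(\<Sum>y\<in>M. (c1 + (if z = y then e1 else 0)) * (c2 + (if y = w then e2 else 0)))
     = of_nat (card M) * c1 * c2 + (if z \<in> M then e1 * c2 else 0) + (if w \<in> M then c1 * e2 else 0)
       + (if z = w \<and> z \<in> M then e1 * e2 else 0)" for c1 c2 e1 e2 :: complex and z w :: "'a::finite" and M :: "'a set"
  proof -
    have "(\<Sum>y\<in>M. (c1 + (if z = y then e1 else 0)) * (c2 + (if y = w then e2 else 0)))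
      = (\<Sum>y\<in>M. c1 * c2 + (if z = y then e1 * c2 else 0) + (if y = w then c1 * e2 else 0) + (if z = w then (if z = y then e1 * e2 else 0) else 0))"
      by (rule sum.cong) (auto simp: algebra_simps)
    also have "\<dots> = of_nat (card M) * c1 * c2 + (if z \<in> M then e1 * c2 else 0) + (if w \<in> M then c1 * e2 else 0)
       + (if z = w \<and> z \<in> M then e1 * e2 else 0)"
      by (simp only: sum.distrib sum_constant sum.delta sum.delta' sum.neutral_const if_distrib[of "\<lambda>x. sum x M" for M] cong: if_cong) (cases "z = w"; auto simp: algebra_simps sum.delta)
    finally show ?thesis .
  qed
  let ?F1 = "Fm M al be ga de ep" and ?F2 = "Fm M al' be' ga' de' ep'"
  have E: "(?F1 ** ?F2) $ z $ w = (Fm M (of_nat (card M) * al * al' + of_nat (card (-M)) * ga * de' + al * ep' + ep * al')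
        (of_nat (card M) * de * ga' + of_nat (card (-M)) * be * be')
        (of_nat (card M) * al * ga' + of_nat (card (-M)) * ga * be' + ep * ga')
        (of_nat (card M) * de * al' + of_nat (card (-M)) * be * de' + de * ep')
        (ep * ep')) $ z $ w" for z w
  proof -
    have S1: "(\<Sum>y\<in>M. ?F1 $ z $ y * ?F2 $ y $ w) = (\<Sum>y\<in>M. ((if z \<in> M then al else de) + (if z = y then ep else 0))
         * ((if w \<in> M then al' else ga') + (if y = w then ep' else 0)))"
      by (rule sum.cong) (auto simp: Fm_def)
    have S2: "(\<Sum>y\<in>-M. ?F1 $ z $ y * ?F2 $ y $ w) = (\<Sum>y\<in>-M. (if z \<in> M then ga else be) * (if w \<in> M then de' else be'))"
      by (rule sum.cong) (auto simp: Fm_def)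
    show ?thesis
      unfolding matrix_matrix_mult_def vec_lambda_beta
      apply (subst sum_split_M[of _ M])
      unfolding S1 S2 A
      by (cases "z \<in> M"; cases "w \<in> M"; cases "z = w"; simp add: Fm_def algebra_simps)
  qed
  show ?thesis by (simp add: vec_eq_iff E)
qed

lemma Fm_diff: "Fm M a b c d e - Fm M a' b' c' d' e' = Fm M (a-a') (b-b') (c-c') (d-d') (e-e')"
  by (simp add: vec_eq_iff Fm_def)

lemma Fm_cong: "a = a' \<Longrightarrow> b = b' \<Longrightarrow> x = x' \<Longrightarrow> y = y' \<Longrightarrow> e = e' \<Longrightarrow> Fm M a b x y e = Fm M a' b' x' y' e'"
  by simp

definition G :: "(bool^'n::finite) set \<Rightarrow> real \<Rightarrow> real \<Rightarrow> real \<Rightarrow> real \<Rightarrow> real \<Rightarrow> 'n op" where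
"G M a b x y e = Fm M (\<i> * of_real a) (\<i> * of_real b) (of_real x + \<i> * of_real y) (- of_real x + \<i> * of_real y) (\<i> * of_real e)"

lemma G_entry: "G M a b x y e $ z $ w = (if z \<in> M then (if w \<in> M then \<i> * of_real a else of_real x + \<i> * of_real y)
   else (if w \<in> M then - of_real x + \<i> * of_real y else \<i> * of_real b)) + (if z = w \<and> z \<in> M then \<i> * of_real e else 0)"
  by (simp add: G_def Fm_def)

lemma G_cong: "a = a' \<Longrightarrow> b = b' \<Longrightarrow> x = x' \<Longrightarrow> y = y' \<Longrightarrow> e = e' \<Longrightarrow> G M a b x y e = G M a' b' x' y' e'"
  by simp

lemma G_lin: "c *\<^sub>R G M a b x y e + d *\<^sub>R G M a' b' x' y' e' = G M (c*a+d*a') (c*b+d*b') (c*x+d*x') (c*y+d*y') (c*e+d*e')"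
  apply (simp add: vec_eq_iff G_entry)
  apply (simp add: scaleR_conv_of_real algebra_simps)
  done

lemma G_zero: "G M 0 0 0 0 0 = 0"
  by (simp add: vec_eq_iff G_entry)

lemma G_comm:
  fixes M :: "(bool^'n::finite) set"
  defines "m \<equiv> real (card M)" and "k \<equiv> real (card (- M))"
  shows "commutator (G M a b x y e) (G M a' b' x' y' e') =
    G M (2*k*(x*y'-y*x')) (-2*m*(x*y'-y*x')) (-m*(a*y'-a'*y) - k*(b'*y-b*y') - (e*y'-e'*y))
        (m*(a*x'-a'*x)+k*(b'*x-b*x')+(e*x'-e'*x)) 0"
  unfolding commutator_def G_def Fm_mult Fm_diff
  by (rule Fm_cong; simp add: complex_eq_iff m_def k_def algebra_simps)

lemma gens_G: "iop (H_C M) = G M 0 0 0 0 1" "iop H_M = G M 1 1 0 1 0"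
  by (simp_all add: vec_eq_iff G_entry iop_def H_C_def H_M_def)

lemma lin2:
  assumes "subspace S" "G M a b x y e \<in> S" "G M a' b' x' y' e' \<in> S"
    and "G M A B X Y E = G M (c*a+d*a') (c*b+d*b') (c*x+d*x') (c*y+d*y') (c*e+d*e')"
  shows "G M A B X Y E \<in> S"
  using assms G_lin[of c M a b x y e d a' b' x' y' e'] subspace_add subspace_scale by metis

definition LL :: "(bool^'n::finite) set \<Rightarrow> 'n op set" where
  "LL M = (\<lambda>(a,b,x,y,e). G M a b x y e) ` UNIV"

lemma LL_mem: "G M a b x y e \<in> LL M"
  unfolding LL_def by (rule image_eqI[where x="(a,b,x,y,e)"]) auto

lemma LL_subspace: "subspace (LL M)"
  unfolding subspace_def
proof (intro conjI ballI allI)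
  show "0 \<in> LL M" using LL_mem[of M 0 0 0 0 0] by (simp add: G_zero)
next
  fix u v assume "u \<in> LL M" "v \<in> LL M"
  then show "u + v \<in> LL M" unfolding LL_def
    using G_lin[of 1 M _ _ _ _ _ 1] LL_mem unfolding LL_def by auto
next
  fix c :: real and u assume "u \<in> LL M"
  then show "c *\<^sub>R u \<in> LL M" unfolding LL_def
    using G_lin[of c M _ _ _ _ _ 0 0 0 0 0 0] LL_mem G_zero unfolding LL_def by auto
qed

lemma LL_comm: "A \<in> LL M \<Longrightarrow> B \<in> LL M \<Longrightarrow> commutator A B \<in> LL M"
  unfolding LL_def by (auto simp: G_comm intro!: LL_mem[unfolded LL_def])

lemma G_inj1:
  assumes "G M a b x y e = G M a' b' x' y' e'" "z0 \<in> M" "v0 \<notin> M"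
  shows "a + e = a' + e' \<and> b = b' \<and> x = x' \<and> y = y'"
proof -
  have E: "\<And>z w. G M a b x y e $ z $ w = G M a' b' x' y' e' $ z $ w" using assms(1) by simp
  have "z0 \<noteq> v0" using assms by auto
  from E[of z0 z0] E[of v0 v0] E[of z0 v0] assms(2,3) \<open>z0 \<noteq> v0\<close> show ?thesis
    by (auto simp: G_entry complex_eq_iff)
qed

lemma G_inj2:
  assumes "G M a b x y e = G M a' b' x' y' e'" "z0 \<in> M" "z1 \<in> M" "z0 \<noteq> z1"
  shows "a = a'"
proof -
  have "\<And>z w. G M a b x y e $ z $ w = G M a' b' x' y' e' $ z $ w" using assms(1) by simp
  from this[of z0 z1] assms(2-4) show ?thesis
    by (auto simp: G_entry complex_eq_iff)
qed

lemma linear_G5: "linear (\<lambda>(a,b,x,y,e). G M a b x y e)"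
proof (rule linearI)
  fix u v :: "real*real*real*real*real" and c :: real
  show "(case u + v of (a, b, x, y, e) \<Rightarrow> G M a b x y e) =
       (case u of (a, b, x, y, e) \<Rightarrow> G M a b x y e) + (case v of (a, b, x, y, e) \<Rightarrow> G M a b x y e)"
    using G_lin[of 1 M _ _ _ _ _ 1] by (cases u; cases v) simp
  show "(case c *\<^sub>R u of (a, b, x, y, e) \<Rightarrow> G M a b x y e) = c *\<^sub>R (case u of (a, b, x, y, e) \<Rightarrow> G M a b x y e)"
    using G_lin[of c M _ _ _ _ _ 0 0 0 0 0 0] G_zero by (cases u) simp
qed

lemma linear_G4: "linear (\<lambda>(a,b,x,y). G M a b x y 0)"
proof (rule linearI)
  fix u v :: "real*real*real*real" and c :: real
  show "(case u + v of (a, b, x, y) \<Rightarrow> G M a b x y 0) =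
       (case u of (a, b, x, y) \<Rightarrow> G M a b x y 0) + (case v of (a, b, x, y) \<Rightarrow> G M a b x y 0)"
    using G_lin[of 1 M _ _ _ _ 0 1 _ _ _ _ 0] by (cases u; cases v) simp
  show "(case c *\<^sub>R u of (a, b, x, y) \<Rightarrow> G M a b x y 0) = c *\<^sub>R (case u of (a, b, x, y) \<Rightarrow> G M a b x y 0)"
    using G_lin[of c M _ _ _ _ 0 0 0 0 0 0 0] G_zero by (cases u) simp
qed

theorem theorem5:
  fixes M :: "(bool ^ 'n::finite) set"
  assumes "1 \<le> card M" and "card M < 2 ^ CARD('n)"
  shows "dim (g_QWOA_Search M) = (if card M = 1 then 4 else 5)"
proof -
  let ?S = "g_QWOA_Search M"
  define m where "m = real (card M)"
  define k where "k = real (card (- M))"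
  have cU: "card (UNIV :: (bool^'n) set) = 2 ^ CARD('n)" by simp
  have cC: "card (- M) = card (UNIV :: (bool^'n) set) - card M"
    by (simp add: Compl_eq_Diff_UNIV card_Diff_subset)
  have kpos: "k > 0" using assms cC cU unfolding k_def by simp
  have mpos: "m > 0" using assms unfolding m_def by simp
  have S1: "?S \<subseteq> LL M"
    unfolding g_QWOA_Search_def lie_generated_def
    by (rule Inter_lower) (simp add: LL_subspace LL_comm gens_G(1) gens_G(2)[of M] LL_mem)
  have sS: "subspace ?S"
    unfolding g_QWOA_Search_def lie_generated_def by (rule subspace_Inter) blast
  have g1: "G M 0 0 0 0 1 \<in> ?S"
    unfolding g_QWOA_Search_def lie_generated_def gens_G(1) gens_G(2)[of M] by blast
  have g2: "G M 1 1 0 1 0 \<in> ?S"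
    unfolding g_QWOA_Search_def lie_generated_def gens_G(1) gens_G(2)[of M] by blast
  have cl: "commutator A B \<in> ?S" if "A \<in> ?S" "B \<in> ?S" for A B
    using that unfolding g_QWOA_Search_def lie_generated_def by blast
  have g3: "G M 0 0 (-1) 0 0 \<in> ?S"
    using cl[OF g1 g2] by (simp add: G_comm)
  have g4: "G M (-2*k) (2*m) 0 (m-k) 0 \<in> ?S"
    using cl[OF g3 g2] by (simp add: G_comm m_def k_def)
  have g5: "G M (-2*k*(m-k)) (2*m*(m-k)) 0 (-4*k*m) 0 \<in> ?S"
    using cl[OF g3 g4] by (simp add: G_comm m_def k_def algebra_simps)
  define D where "D = (m+k)^2"
  have D0: "D \<noteq> 0" using mpos kpos unfolding D_def by simp
  have ey: "G M 0 0 0 1 0 \<in> ?S"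
    apply (rule lin2[OF sS g5 g4, of _ _ _ _ _ "-1/D" "(m-k)/D"], rule G_cong)
    using D0 by (simp_all add: field_simps) (simp add: D_def power2_eq_square algebra_simps)
  have h1: "G M 1 1 0 0 0 \<in> ?S"
    by (rule lin2[OF sS g2 ey, of _ _ _ _ _ 1 "-1"], rule G_cong) simp_all
  have h2: "G M (-2*k) (2*m) 0 0 0 \<in> ?S"
    by (rule lin2[OF sS g4 ey, of _ _ _ _ _ 1 "-(m-k)"], rule G_cong) simp_all
  define P where "P = m + k"
  have P0: "P \<noteq> 0" using mpos kpos unfolding P_def by simp
  have ea: "G M 1 0 0 0 0 \<in> ?S"
    apply (rule lin2[OF sS h1 h2, of _ _ _ _ _ "m/P" "-1/(2*P)"], rule G_cong)
    using P0 by (simp_all add: field_simps) (simp_all add: P_def)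
  have eb: "G M 0 1 0 0 0 \<in> ?S"
    apply (rule lin2[OF sS h1 h2, of _ _ _ _ _ "k/P" "1/(2*P)"], rule G_cong)
    using P0 by (simp_all add: field_simps) (simp_all add: P_def)
  have ex: "G M 0 0 1 0 0 \<in> ?S"
    by (rule lin2[OF sS g3 g3, of _ _ _ _ _ "-1" 0], rule G_cong) simp_all
  have S2: "LL M \<subseteq> ?S"
  proof
    fix A assume "A \<in> LL M"
    then obtain a b x y e where A: "A = G M a b x y e" unfolding LL_def by auto
    have 1: "G M a b 0 0 0 \<in> ?S"
      by (rule lin2[OF sS ea eb, of _ _ _ _ _ a b], rule G_cong) simp_all
    have 2: "G M 0 0 x y 0 \<in> ?S"
      by (rule lin2[OF sS ex ey, of _ _ _ _ _ x y], rule G_cong) simp_all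
    have 3: "G M a b x y 0 \<in> ?S"
      by (rule lin2[OF sS 1 2, of _ _ _ _ _ 1 1], rule G_cong) simp_all
    have 4: "G M a b x y e \<in> ?S"
      by (rule lin2[OF sS 3 g1, of _ _ _ _ _ 1 e], rule G_cong) simp_all
    show "A \<in> ?S" using 4 A by simp
  qed
  have SL: "?S = LL M" using S1 S2 by blast
  have "M \<noteq> UNIV" using assms cU by auto
  then obtain v0 where v0: "v0 \<notin> M" by auto
  from assms(1) obtain z0 where z0: "z0 \<in> M" by fastforce
  show ?thesis
  proof (cases "card M = 1")
    case True
    then have Mz: "M = {z0}" using z0 by (metis card_1_singletonE singletonD)
    have "LL M = (\<lambda>(a,b,x,y). G M a b x y 0) ` UNIV"
    proof (intro equalityI subsetI)
      have eq: "G M a b x y e = G M (a+e) b x y 0" for a b x y e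
        by (auto simp: vec_eq_iff G_entry Mz algebra_simps)
      fix A assume "A \<in> LL M"
      then obtain a b x y e where "A = G M a b x y e" unfolding LL_def by auto
      then show "A \<in> (\<lambda>(a,b,x,y). G M a b x y 0) ` UNIV"
        using eq by (auto intro!: image_eqI[where x="(a+e,b,x,y)"])
    next
      fix A assume "A \<in> (\<lambda>(a,b,x,y). G M a b x y 0) ` UNIV"
      then obtain a b x y where "A = G M a b x y 0" by auto
      then show "A \<in> LL M" using LL_mem by simp
    qed
    moreover have inj4: "inj (\<lambda>(a,b,x,y). G M a b x y 0)"
    proof (rule injI)
      fix u v :: "real*real*real*real"
      assume h: "(case u of (a, b, x, y) \<Rightarrow> G M a b x y 0) = (case v of (a, b, x, y) \<Rightarrow> G M a b x y 0)"
      obtain a b x y where u: "u = (a,b,x,y)" by (cases u) auto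
      obtain a' b' x' y' where v: "v = (a',b',x',y')" by (cases v) auto
      have E: "G M a b x y 0 = G M a' b' x' y' 0" using h u v by simp
      show "u = v" using G_inj1[OF E z0 v0] u v by simp
    qed
    ultimately have "dim (LL M) = dim (UNIV :: (real*real*real*real) set)"
      using dim_image_eq[OF linear_G4[of M] inj_on_subset[OF inj4 subset_UNIV]] by simp
    then show ?thesis using SL True by simp
  next
    case False
    then have "card (M - {z0}) \<noteq> 0" using assms(1) z0 by simp
    then have "M - {z0} \<noteq> {}" by (metis card.empty)
    then obtain z1 where z1: "z1 \<in> M" "z1 \<noteq> z0" by blast
    have inj5: "inj (\<lambda>(a,b,x,y,e). G M a b x y e)"
    proof (rule injI)
      fix u v :: "real*real*real*real*real"
      assume h: "(case u of (a, b, x, y, e) \<Rightarrow> G M a b x y e) = (case v of (a, b, x, y, e) \<Rightarrow> G M a b x y e)"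
      obtain a b x y e where u: "u = (a,b,x,y,e)" by (cases u) auto
      obtain a' b' x' y' e' where v: "v = (a',b',x',y',e')" by (cases v) auto
      have E: "G M a b x y e = G M a' b' x' y' e'" using h u v by simp
      show "u = v" using G_inj1[OF E z0 v0] G_inj2[OF E z0 z1(1) z1(2)[symmetric]] u v by simp
    qed
    have "dim (LL M) = dim (UNIV :: (real*real*real*real*real) set)"
      unfolding LL_def using dim_image_eq[OF linear_G5[of M] inj_on_subset[OF inj5 subset_UNIV]] by simp
    then show ?thesis using SL False by simp
  qed
qed
end
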